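(* Let $\Delta$ be a finite, flag, simply connected simplicial complex and $\mathcal{P}_H$ as in the context. Let $e\cdot f\cdot g$ be a combinatorial 1-cycle in $\Delta$. Then for every $n\in\mathbb{Z}$, $\mathrm{Area}_{\mathcal{P}_H}(e^nf^ng^n)\le 3|n|^2$.
   Context: $\mathrm{Edge}(\Delta)$ is the set of directed edges of $\Delta$; for $e$ in it, $\iota e$, $\tau e$ are its initial and terminal vertices and $\overline{e}$ is the reversed edge. $e\cdot f\cdot g$ is a combinatorial 1-cycle if $\tau e=\iota f$, $\tau f=\iota g$, $\tau g=\iota e$. $\mathcal{P}_H=\langle\mathrm{Edge}(\Delta)\mid\mathcal{R}_H\rangle$ where $\mathcal{R}_H$ consists of the words $e\overline{e}$ ($e\in\mathrm{Edge}(\Delta)$) and $efg$, $e^{-1}f^{-1}g^{-1}$ for every combinatorial 1-cycle $e\cdot f\cdot g$. For a word $w$ representing the identity, $\mathrm{Area}_{\mathcal{P}_H}(w)$ is the least $m$ such that $w$ is freely equal to $\prod_{i=1}^m x_ir_ix_i^{-1}$ with $r_i\in\mathcal{R}_H^{\pm1}$. For a letter $e$ and $m\in\mathbb{Z}$, $e^m$ is the word of $m$ copies of $e$ if $m\ge0$ and $|m|$ copies of $e^{-1}$ if $m<0$. *)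

theory Defs
  imports "HOL-Analysis.Analysis"
begin

definition simplicial_complex :: "'v set set \<Rightarrow> bool" where
  "simplicial_complex \<Delta> \<longleftrightarrow>
     (\<forall>\<sigma>\<in>\<Delta>. finite \<sigma> \<and> \<sigma> \<noteq> {}) \<and>
     (\<forall>\<sigma>\<in>\<Delta>. \<forall>\<tau>. \<tau> \<subseteq> \<sigma> \<and> \<tau> \<noteq> {} \<longrightarrow> \<tau> \<in> \<Delta>)"

definition vertices :: "'v set set \<Rightarrow> 'v set" where
  "vertices \<Delta> = \<Union>\<Delta>"

definition flag_complex :: "'v set set \<Rightarrow> bool" where
  "flag_complex \<Delta> \<longleftrightarrow>
     (\<forall>\<sigma>. finite \<sigma> \<and> \<sigma> \<noteq> {} \<and> \<sigma> \<subseteq> vertices \<Delta> \<and>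
          (\<forall>u\<in>\<sigma>. \<forall>v\<in>\<sigma>. {u, v} \<in> \<Delta>) \<longrightarrow> \<sigma> \<in> \<Delta>)"

definition realization :: "('v::finite) set set \<Rightarrow> (real ^ 'v) set" where
  "realization \<Delta> = (\<Union>\<sigma>\<in>\<Delta>. convex hull ((\<lambda>v. axis v 1) ` \<sigma>))"

definition Edge :: "'v set set \<Rightarrow> ('v \<times> 'v) set" where
  "Edge \<Delta> = {(u, v). u \<noteq> v \<and> {u, v} \<in> \<Delta>}"

definition iota :: "'v \<times> 'v \<Rightarrow> 'v" where "iota e = fst e"
definition tau :: "'v \<times> 'v \<Rightarrow> 'v" where "tau e = snd e"
definition rev_edge :: "'v \<times> 'v \<Rightarrow> 'v \<times> 'v" where "rev_edge e = (snd e, fst e)"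

definition comb_1cycle :: "'v set set \<Rightarrow> 'v \<times> 'v \<Rightarrow> 'v \<times> 'v \<Rightarrow> 'v \<times> 'v \<Rightarrow> bool" where
  "comb_1cycle \<Delta> e f g \<longleftrightarrow> e \<in> Edge \<Delta> \<and> f \<in> Edge \<Delta> \<and> g \<in> Edge \<Delta> \<and>
     tau e = iota f \<and> tau f = iota g \<and> tau g = iota e"

text \<open>A letter is a generator together with a sign (True = x, False = x^-1).\<close>
type_synonym 'a word = "('a \<times> bool) list"

definition inv_word :: "'a word \<Rightarrow> 'a word" where
  "inv_word w = rev (map (\<lambda>(a, b). (a, \<not> b)) w)"

inductive reduce1 :: "'a word \<Rightarrow> 'a word \<Rightarrow> bool" where
  "reduce1 (xs @ [(a, b), (a, \<not> b)] @ ys) (xs @ ys)"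

definition freely_eq :: "'a word \<Rightarrow> 'a word \<Rightarrow> bool" where
  "freely_eq = (sup reduce1 reduce1\<inverse>\<inverse>)\<^sup>*\<^sup>*"

definition relators_H :: "'v set set \<Rightarrow> ('v \<times> 'v) word set" where
  "relators_H \<Delta> =
     {[(e, True), (rev_edge e, True)] | e. e \<in> Edge \<Delta>} \<union>
     {[(e, True), (f, True), (g, True)] | e f g. comb_1cycle \<Delta> e f g} \<union>
     {[(e, False), (f, False), (g, False)] | e f g. comb_1cycle \<Delta> e f g}"

definition area_witness :: "'a word set \<Rightarrow> 'a word \<Rightarrow> nat \<Rightarrow> bool" where
  "area_witness R w m \<longleftrightarrow>
     (\<exists>xs :: ('a word \<times> 'a word) list. length xs = m \<and>
        (\<forall>(x, r) \<in> set xs. r \<in> R \<or> inv_word r \<in> R) \<and>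
        freely_eq w (concat (map (\<lambda>(x, r). x @ r @ inv_word x) xs)))"

definition represents_identity :: "'a word set \<Rightarrow> 'a word \<Rightarrow> bool" where
  "represents_identity R w \<longleftrightarrow> (\<exists>m. area_witness R w m)"

definition Area :: "'a word set \<Rightarrow> 'a word \<Rightarrow> nat" where
  "Area R w = (LEAST m. area_witness R w m)"

definition letter_pow :: "'a \<Rightarrow> int \<Rightarrow> 'a word" where
  "letter_pow e m = (if m \<ge> 0 then replicate (nat m) (e, True) else replicate (nat (- m)) (e, False))"

end

theory Submission
  imports Defs
begin

definition flip :: "'a \<times> bool \<Rightarrow> 'a \<times> bool" where "flip p = (fst p, \<not> snd p)"

lemma inv_word_append[simp]: "inv_word (a @ b) = inv_word b @ inv_word a"
  by (simp add: inv_word_def)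
lemma inv_word_inv[simp]: "inv_word (inv_word a) = a"
  by (induction a) (auto simp: inv_word_def)
lemma inv_word_nil[simp]: "inv_word [] = []" by (simp add: inv_word_def)
lemma inv_word_Cons[simp]: "inv_word (a # w) = inv_word w @ [flip a]"
  by (cases a) (simp add: inv_word_def flip_def)
lemma inv_word_single: "inv_word [x] = [flip x]"
  by (cases x) (simp add: inv_word_def flip_def)
lemma flip_flip[simp]: "flip (flip x) = x" by (simp add: flip_def)
lemma inv_word_rep[simp]: "inv_word (replicate m x) = replicate m (flip x)"
  by (induction m) (simp_all add: replicate_append_same[symmetric])

lemma fe_refl: "freely_eq a a" by (simp add: freely_eq_def)
lemma fe_sym: "freely_eq a b \<Longrightarrow> freely_eq b a"
  unfolding freely_eq_def
proof (induction rule: rtranclp_induct)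
  case base then show ?case by simp
next
  case (step b c)
  from step.hyps(2) have "(sup reduce1 reduce1\<inverse>\<inverse>) c b" by auto
  then show ?case using step.IH by (rule converse_rtranclp_into_rtranclp)
qed
lemma fe_trans: "freely_eq a b \<Longrightarrow> freely_eq b c \<Longrightarrow> freely_eq a c"
  unfolding freely_eq_def by (rule rtranclp_trans)

lemma reduce1_cong: "reduce1 a b \<Longrightarrow> reduce1 (x @ a @ y) (x @ b @ y)"
proof (induction rule: reduce1.induct)
  case (1 xs a b ys)
  have "reduce1 ((x @ xs) @ [(a, b), (a, \<not> b)] @ (ys @ y)) ((x @ xs) @ (ys @ y))"
    by (rule reduce1.intros)
  then show ?case by simp
qed

lemma fe_cong: "freely_eq a b \<Longrightarrow> freely_eq (x @ a @ y) (x @ b @ y)"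
  unfolding freely_eq_def
proof (induction rule: rtranclp_induct)
  case base then show ?case by simp
next
  case (step b c)
  from step.hyps(2) have "(sup reduce1 reduce1\<inverse>\<inverse>) (x @ b @ y) (x @ c @ y)"
    using reduce1_cong by auto
  with step.IH show ?case by (rule rtranclp.rtrancl_into_rtrancl)
qed

lemma fe_cancel: "freely_eq (u @ x @ inv_word x @ v) (u @ v)"
proof (induction x arbitrary: u v)
  case Nil then show ?case by (simp add: fe_refl)
next
  case (Cons a x)
  obtain c b where a: "a = (c, b)" by (cases a)
  have e: "u @ (a # x) @ inv_word (a # x) @ v = (u @ [a]) @ x @ inv_word x @ ([(c, \<not> b)] @ v)"
    using a by (simp add: flip_def)
  have 1: "freely_eq ((u @ [a]) @ x @ inv_word x @ ([(c, \<not> b)] @ v)) ((u @ [a]) @ ([(c, \<not> b)] @ v))"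
    by (rule Cons.IH)
  have "reduce1 (u @ [(c, b), (c, \<not> b)] @ v) (u @ v)" by (rule reduce1.intros)
  then have "(sup reduce1 reduce1\<inverse>\<inverse>) (u @ [(c, b), (c, \<not> b)] @ v) (u @ v)" by simp
  then have "freely_eq (u @ [(c, b), (c, \<not> b)] @ v) (u @ v)"
    unfolding freely_eq_def by (rule r_into_rtranclp)
  then have 2: "freely_eq ((u @ [a]) @ ([(c, \<not> b)] @ v)) (u @ v)"
    using a by simp
  show ?case unfolding e by (rule fe_trans[OF 1 2])
qed

lemma fe_cancel2: "freely_eq (u @ inv_word x @ x @ v) (u @ v)"
  using fe_cancel[of u "inv_word x" v] by simp

definition conjw :: "'a word \<times> 'a word \<Rightarrow> 'a word" where
  "conjw p = fst p @ snd p @ inv_word (fst p)"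

lemma aw_def2: "area_witness R w m \<longleftrightarrow>
     (\<exists>xs. length xs = m \<and> (\<forall>p \<in> set xs. snd p \<in> R \<or> inv_word (snd p) \<in> R) \<and>
        freely_eq w (concat (map conjw xs)))"
  unfolding area_witness_def conjw_def split_def by simp

lemma aw_freely: "freely_eq w w' \<Longrightarrow> area_witness R w' k \<Longrightarrow> area_witness R w k"
  unfolding aw_def2 using fe_trans by blast

lemma aw_nil: "area_witness R [] 0"
  unfolding aw_def2 by (auto simp: fe_refl)

lemma aw_rel: "r \<in> R \<Longrightarrow> area_witness R r 1"
  unfolding aw_def2
  by (rule exI[of _ "[([], r)]"]) (auto simp: conjw_def fe_refl)

lemma aw_append: "area_witness R w k \<Longrightarrow> area_witness R v l \<Longrightarrow> area_witness R (w @ v) (k + l)"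
  unfolding aw_def2
proof (elim exE conjE)
  fix xs ys
  assume h: "length xs = k" "\<forall>p\<in>set xs. snd p \<in> R \<or> inv_word (snd p) \<in> R"
    "freely_eq w (concat (map conjw xs))" "length ys = l"
    "\<forall>p\<in>set ys. snd p \<in> R \<or> inv_word (snd p) \<in> R" "freely_eq v (concat (map conjw ys))"
  have "freely_eq (w @ v) (concat (map conjw xs) @ v)"
    using fe_cong[OF h(3), of "[]" v] by simp
  moreover have "freely_eq (concat (map conjw xs) @ v) (concat (map conjw xs) @ concat (map conjw ys))"
    using fe_cong[OF h(6), of "concat (map conjw xs)" "[]"] by simp
  ultimately show "\<exists>zs. length zs = k + l \<and> (\<forall>p\<in>set zs. snd p \<in> R \<or> inv_word (snd p) \<in> R) \<and>
          freely_eq (w @ v) (concat (map conjw zs))"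
    using h by (intro exI[of _ "xs @ ys"]) (auto intro: fe_trans)
qed

lemma conj_shift: "freely_eq (x @ concat (map conjw xs) @ inv_word x)
   (concat (map (\<lambda>p. conjw (x @ fst p, snd p)) xs))"
proof (induction xs)
  case Nil then show ?case using fe_cancel[of "[]" x "[]"] by simp
next
  case (Cons p xs)
  let ?C = "concat (map conjw xs)"
  have "freely_eq (x @ conjw p @ ?C @ inv_word x)
      ((x @ conjw p) @ inv_word x @ x @ (?C @ inv_word x))"
    using fe_sym[OF fe_cancel2[of "x @ conjw p" x "?C @ inv_word x"]] by simp
  also have "(x @ conjw p) @ inv_word x @ x @ (?C @ inv_word x) =
     conjw (x @ fst p, snd p) @ (x @ ?C @ inv_word x)"
    by (simp add: conjw_def)
  finally have 1: "freely_eq (x @ conjw p @ ?C @ inv_word x) (conjw (x @ fst p, snd p) @ (x @ ?C @ inv_word x))" .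
  have 2: "freely_eq (conjw (x @ fst p, snd p) @ (x @ ?C @ inv_word x))
     (conjw (x @ fst p, snd p) @ concat (map (\<lambda>p. conjw (x @ fst p, snd p)) xs))"
    using fe_cong[OF Cons.IH, of "conjw (x @ fst p, snd p)" "[]"] by simp
  show ?case using fe_trans[OF 1 2] by simp
qed

lemma aw_conj: "area_witness R w k \<Longrightarrow> area_witness R (x @ w @ inv_word x) k"
  unfolding aw_def2
proof (elim exE conjE)
  fix xs
  assume h: "length xs = k" "\<forall>p\<in>set xs. snd p \<in> R \<or> inv_word (snd p) \<in> R"
    "freely_eq w (concat (map conjw xs))"
  have "freely_eq (x @ w @ inv_word x) (x @ concat (map conjw xs) @ inv_word x)"
    using fe_cong[OF h(3)] by simp
  then show "\<exists>zs. length zs = k \<and> (\<forall>p\<in>set zs. snd p \<in> R \<or> inv_word (snd p) \<in> R) \<and>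
          freely_eq (x @ w @ inv_word x) (concat (map conjw zs))"
    using h conj_shift[of x xs]
    by (intro exI[of _ "map (\<lambda>p. (x @ fst p, snd p)) xs"]) (auto simp: comp_def intro: fe_trans)
qed

lemma reduce1_inv: "reduce1 a b \<Longrightarrow> reduce1 (inv_word a) (inv_word b)"
proof (induction rule: reduce1.induct)
  case (1 xs a b ys)
  have "reduce1 (inv_word ys @ [(a, b), (a, \<not> b)] @ inv_word xs) (inv_word ys @ inv_word xs)"
    by (rule reduce1.intros)
  then show ?case by (simp add: inv_word_def)
qed

lemma fe_inv: "freely_eq a b \<Longrightarrow> freely_eq (inv_word a) (inv_word b)"
  unfolding freely_eq_def
proof (induction rule: rtranclp_induct)
  case base then show ?case by simp
next
  case (step b c)
  from step.hyps(2) have "(sup reduce1 reduce1\<inverse>\<inverse>) (inv_word b) (inv_word c)"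
    using reduce1_inv by auto
  with step.IH show ?case by (rule rtranclp.rtrancl_into_rtrancl)
qed

lemma inv_concat: "inv_word (concat (map conjw xs)) =
   concat (map conjw (rev (map (\<lambda>p. (fst p, inv_word (snd p))) xs)))"
  by (induction xs) (simp_all add: conjw_def)

lemma aw_inv: "area_witness R w k \<Longrightarrow> area_witness R (inv_word w) k"
  unfolding aw_def2
proof (elim exE conjE)
  fix xs
  assume h: "length xs = k" "\<forall>p\<in>set xs. snd p \<in> R \<or> inv_word (snd p) \<in> R"
    "freely_eq w (concat (map conjw xs))"
  show "\<exists>zs. length zs = k \<and> (\<forall>p\<in>set zs. snd p \<in> R \<or> inv_word (snd p) \<in> R) \<and>
          freely_eq (inv_word w) (concat (map conjw zs))"
    using h fe_inv[OF h(3)] inv_concat[of xs]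
    by (intro exI[of _ "rev (map (\<lambda>p. (fst p, inv_word (snd p))) xs)"]) auto
qed

definition sim :: "'a word set \<Rightarrow> 'a word \<Rightarrow> 'a word \<Rightarrow> nat \<Rightarrow> bool" where
  "sim R u v k = area_witness R (u @ inv_word v) k"

lemma aw_cancel: "area_witness R (v @ inv_word v) 0"
  using aw_freely[OF _ aw_nil] fe_cancel[of "[]" v "[]"] by simp

lemma sim_refl: "sim R u u 0"
  unfolding sim_def by (rule aw_cancel)

lemma sim_sym: "sim R u v k \<Longrightarrow> sim R v u k"
  unfolding sim_def using aw_inv by fastforce

lemma sim_trans: "sim R u v k \<Longrightarrow> sim R v w l \<Longrightarrow> sim R u w (k + l)"
  unfolding sim_def
proof -
  assume a: "area_witness R (u @ inv_word v) k" "area_witness R (v @ inv_word w) l"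
  have "area_witness R (u @ inv_word v @ v @ inv_word w) (k + l)"
    using aw_append[OF a] by simp
  moreover have "freely_eq (u @ inv_word w) (u @ inv_word v @ v @ inv_word w)"
    using fe_sym[OF fe_cancel2] .
  ultimately show "area_witness R (u @ inv_word w) (k + l)" using aw_freely by blast
qed

lemma sim_cong: "sim R u v k \<Longrightarrow> sim R (a @ u @ b) (a @ v @ b) k"
  unfolding sim_def
proof -
  assume "area_witness R (u @ inv_word v) k"
  then have 1: "area_witness R (a @ (u @ inv_word v) @ inv_word a) k" by (rule aw_conj)
  have "freely_eq ((a @ u) @ b @ inv_word b @ (inv_word v @ inv_word a)) ((a @ u) @ (inv_word v @ inv_word a))"
    by (rule fe_cancel)
  then have "freely_eq ((a @ u @ b) @ inv_word (a @ v @ b)) (a @ (u @ inv_word v) @ inv_word a)" by simp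
  with 1 show "area_witness R ((a @ u @ b) @ inv_word (a @ v @ b)) k" using aw_freely by blast
qed

lemma sim_inv: "sim R u v k \<Longrightarrow> sim R (inv_word u) (inv_word v) k"
  unfolding sim_def
proof -
  assume "area_witness R (u @ inv_word v) k"
  then have "area_witness R (inv_word (u @ inv_word v)) k" by (rule aw_inv)
  then have 1: "area_witness R (inv_word u @ inv_word (u @ inv_word v) @ inv_word (inv_word u)) k"
    by (rule aw_conj)
  have "freely_eq (inv_word u @ v @ inv_word u @ u @ []) (inv_word u @ v @ [])"
    using fe_cancel2[of "inv_word u @ v" u "[]"] by simp
  then have "freely_eq (inv_word u @ inv_word (inv_word v)) (inv_word u @ inv_word (u @ inv_word v) @ inv_word (inv_word u))"
    by (simp add: fe_sym)
  with 1 show "area_witness R (inv_word u @ inv_word (inv_word v)) k" using aw_freely by blast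
qed

lemma main:
  assumes r1: "[x, y, z] \<in> R" and r2: "[flip x, flip y, flip z] \<in> R"
  shows "area_witness R (replicate m x @ replicate m y @ replicate m z) (m * m)"
proof -
  have A: "sim R [x, y] [flip z] 1" unfolding sim_def using aw_rel[OF r1] by simp
  have B: "sim R [flip x, flip y] [z] 1" unfolding sim_def using aw_rel[OF r2] by simp
  have B': "sim R [y, x] [flip z] 1" using sim_inv[OF B] by simp
  have C: "sim R [y, x] [x, y] 2" using sim_trans[OF B' sim_sym[OF A]] by (simp add: numeral_2_eq_2)
  have comm: "sim R (replicate k y @ [x]) ([x] @ replicate k y) (2 * k)" for k
  proof (induction k)
    case 0 then show ?case using sim_refl[of R "[x]"] by simp
  next
    case (Suc k)
    have 1: "sim R (y # replicate k y @ [x]) ([y, x] @ replicate k y) (2 * k)"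
      using sim_cong[OF Suc.IH, where a="[y]" and b="[]"] by simp
    have 2: "sim R ([y, x] @ replicate k y) ([x, y] @ replicate k y) 2"
      using sim_cong[OF C, where a="[]" and b="replicate k y"] by simp
    show ?case using sim_trans[OF 1 2] by simp
  qed
  have P: "sim R (replicate m x @ replicate m y) (replicate m (flip z)) (m * m)" for m
  proof (induction m)
    case 0 then show ?case unfolding sim_def by (simp add: aw_nil)
  next
    case (Suc m)
    have 1: "sim R (replicate m x @ x # replicate m y @ [y]) (replicate m x @ replicate m y @ [x, y]) (2 * m)"
      using sim_cong[OF sim_sym[OF comm], where a="replicate m x" and b="[y]"] by simp
    have 2: "sim R (replicate m x @ replicate m y @ [x, y]) (replicate m x @ replicate m y @ [flip z]) 1"
      using sim_cong[OF A, where a="replicate m x @ replicate m y" and b="[]"] by simp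
    have 3: "sim R (replicate m x @ replicate m y @ [flip z]) (replicate m (flip z) @ [flip z]) (m * m)"
      using sim_cong[OF Suc.IH, where a="[]" and b="[flip z]"] by simp
    have 4: "sim R (replicate m x @ ([x] @ replicate m y) @ [y]) ([] @ replicate m (flip z) @ [flip z]) (2 * m + 1 + m * m)"
      using sim_trans[OF sim_trans[OF 1 2] 3] by simp
    have e1: "replicate m x @ ([x] @ replicate m y) @ [y] = replicate (Suc m) x @ replicate (Suc m) y"
      by (simp add: replicate_append_same[symmetric])
    have e2: "[] @ replicate m (flip z) @ [flip z] = replicate (Suc m) (flip z)"
      by (simp add: replicate_append_same)
    have "2 * m + 1 + m * m = Suc m * Suc m" by simp
    with 4 e1 e2 show ?case by (metis append.left_neutral)

  qed
  have Q: "sim R (replicate m x @ replicate m y @ replicate m z) (replicate m (flip z) @ replicate m z) (m * m)"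
    using sim_cong[OF P, where a="[]" and b="replicate m z"] by simp
  have Z: "sim R (replicate m (flip z) @ replicate m z) [] 0"
    unfolding sim_def using aw_cancel[of R "replicate m (flip z)"] by simp
  have "sim R (replicate m x @ replicate m y @ replicate m z) [] (m * m)"
    using sim_trans[OF Q Z] by simp
  then show ?thesis unfolding sim_def by simp
qed

theorem lemma4p3:
  fixes \<Delta> :: "('v::finite) set set"
    and e f g :: "'v \<times> 'v"
    and n :: int
  assumes "simplicial_complex \<Delta>"
    and "finite \<Delta>"
    and "flag_complex \<Delta>"
    and "simply_connected (realization \<Delta>)"
    and "comb_1cycle \<Delta> e f g"
  shows "represents_identity (relators_H \<Delta>) (letter_pow e n @ letter_pow f n @ letter_pow g n)
    \<and> int (Area (relators_H \<Delta>) (letter_pow e n @ letter_pow f n @ letter_pow g n)) \<le> 3 * \<bar>n\<bar>^2"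
proof -
  let ?R = "relators_H \<Delta>"
  let ?w = "letter_pow e n @ letter_pow f n @ letter_pow g n"
  have rT: "[(e, True), (f, True), (g, True)] \<in> ?R" and rF: "[(e, False), (f, False), (g, False)] \<in> ?R"
    using assms(5) unfolding relators_H_def by blast+
  define m where "m = nat \<bar>n\<bar>"
  have aw: "area_witness ?R ?w (m * m)"
  proof (cases "n \<ge> 0")
    case True
    have "area_witness ?R (replicate m (e, True) @ replicate m (f, True) @ replicate m (g, True)) (m * m)"
      by (rule main) (use rT rF in \<open>simp_all add: flip_def\<close>)
    then show ?thesis using True by (simp add: letter_pow_def m_def)
  next
    case False
    have "area_witness ?R (replicate m (e, False) @ replicate m (f, False) @ replicate m (g, False)) (m * m)"
      by (rule main) (use rT rF in \<open>simp_all add: flip_def\<close>)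
    then show ?thesis using False by (simp add: letter_pow_def m_def)
  qed
  have 1: "represents_identity ?R ?w" using aw unfolding represents_identity_def by blast
  have "Area ?R ?w \<le> m * m" unfolding Area_def by (rule Least_le) (rule aw)
  then have "int (Area ?R ?w) \<le> int (m * m)" by (simp only: of_nat_le_iff)
  also have "int (m * m) = \<bar>n\<bar>^2" by (simp add: m_def power2_eq_square)
  also have "\<dots> \<le> 3 * \<bar>n\<bar>^2" by simp
  finally show ?thesis using 1 by simp
qed

end
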